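(* Let $A=\{\mathbf{a}_1,\dots,\mathbf{a}_m\}\subset\mathbb{Z}^n$ be such that $\mathbb{N}A$ is an affine semigroup, and let $E_1,E_2$ be nonempty disjoint subsets of $\{1,\dots,m\}$ with $E_1\cup E_2=\{1,\dots,m\}$. If $\mathbb{N}A$ is the gluing of $\mathbb{N}A^{E_1}$ and $\mathbb{N}A^{E_2}$, then $\sigma=\mathrm{pos}_{\mathbb{Q}}(A)$ is the direct sum $\sigma_{E_1}\oplus\sigma_{E_2}$, i.e. there is $\mathbf{a}\in\sigma_{E_1}\cap\sigma_{E_2}$ with $\mathrm{span}_{\mathbb{Q}}(\sigma_{E_1})\cap\mathrm{span}_{\mathbb{Q}}(\sigma_{E_2})=\mathbb{Q}\mathbf{a}$, and $\sigma=\mathrm{pos}_{\mathbb{Q}}(\sigma_{E_1}\cup\sigma_{E_2})$.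
   Context: $\mathbb{N}A=\{\sum n_i\mathbf{a}_i: n_i\in\mathbb{N}\}$. An affine semigroup is a finitely generated subsemigroup $S$ of $\mathbb{Z}^n$ with $S\cap(-S)=\{\mathbf 0\}$. For $E\subset\{1,\dots,m\}$, $A^E=\{\mathbf{a}_i:i\in E\}$ and $\sigma_E=\mathrm{pos}_{\mathbb{Q}}(A^E)$ (nonnegative rational combinations). $\mathbb{N}A$ is the gluing of $\mathbb{N}A^{E_1}$ and $\mathbb{N}A^{E_2}$ if there is a nonzero $\mathbf{a}\in\mathbb{N}A^{E_1}\cap\mathbb{N}A^{E_2}$ with $\mathbb{Z}\mathbf{a}=\mathbb{Z}A^{E_1}\cap\mathbb{Z}A^{E_2}$. *)

theory Defs
  imports "HOL-Analysis.Analysis"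
begin

text \<open>Vectors of Z^n are int^'n, vectors of Q^n are rat^'n (the dimension n is the
finite index type 'n). The generators a_1..a_m are a family a :: nat => int^'n on {1..m}.\<close>

definition NA :: "(nat \<Rightarrow> int ^ 'n) \<Rightarrow> nat set \<Rightarrow> (int ^ 'n) set" where
  "NA a E = {\<Sum>i\<in>E. int (c i) *s a i | c. True}"

definition ZA :: "(nat \<Rightarrow> int ^ 'n) \<Rightarrow> nat set \<Rightarrow> (int ^ 'n) set" where
  "ZA a E = {\<Sum>i\<in>E. c i *s a i | c. True}"

definition affine_semigroup :: "(int ^ 'n) set \<Rightarrow> bool" where
  "affine_semigroup S \<longleftrightarrow>
     (\<exists>G. finite G \<and> S = {\<Sum>g\<in>G. int (c g) *s g | c. True}) \<and>
     S \<inter> uminus ` S = {0}"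

definition is_gluing :: "(nat \<Rightarrow> int ^ 'n) \<Rightarrow> nat set \<Rightarrow> nat set \<Rightarrow> bool" where
  "is_gluing a E1 E2 \<longleftrightarrow>
     (\<exists>v. v \<noteq> 0 \<and> v \<in> NA a E1 \<inter> NA a E2 \<and>
          {k *s v | k. True} = ZA a E1 \<inter> ZA a E2)"

definition qvec :: "int ^ 'n \<Rightarrow> rat ^ 'n" where
  "qvec v = (\<chi> j. rat_of_int (v $ j))"

definition posQ :: "(rat ^ 'n) set \<Rightarrow> (rat ^ 'n) set" where
  "posQ S = {\<Sum>v\<in>T. c v *s v | T c. finite T \<and> T \<subseteq> S \<and> (\<forall>v\<in>T. c v \<ge> 0)}"

definition spanQ :: "(rat ^ 'n) set \<Rightarrow> (rat ^ 'n) set" where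
  "spanQ S = {\<Sum>v\<in>T. c v *s v | T c. finite T \<and> T \<subseteq> S}"

definition sigma :: "(nat \<Rightarrow> int ^ 'n) \<Rightarrow> nat set \<Rightarrow> (rat ^ 'n) set" where
  "sigma a E = posQ ((\<lambda>i. qvec (a i)) ` E)"

end

theory Submission imports Defs begin

definition comb :: "(rat \<Rightarrow> bool) \<Rightarrow> (rat ^ 'n) set \<Rightarrow> (rat ^ 'n) set" where
  "comb P S = {\<Sum>v\<in>T. c v *s v | T c. finite T \<and> T \<subseteq> S \<and> (\<forall>v\<in>T. P (c v))}"

lemma posQ_comb: "posQ S = comb (\<lambda>c. c \<ge> 0) S"
  unfolding posQ_def comb_def by simp
lemma spanQ_comb: "spanQ S = comb (\<lambda>c. True) S"
  unfolding spanQ_def comb_def by simp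

lemma comb_zero: "0 \<in> comb P S"
  unfolding comb_def by (rule CollectI, rule exI[of _ "{}"], auto)

lemma comb_base: assumes "P 1" "x \<in> S" shows "x \<in> comb P S"
  unfolding comb_def
  by (rule CollectI, rule exI[of _ "{x}"], rule exI[of _ "\<lambda>_. 1"], use assms in auto)

lemma comb_smult: assumes "\<And>x y. P x \<Longrightarrow> P y \<Longrightarrow> P (x * y)" "P r" "x \<in> comb P S"
  shows "r *s x \<in> comb P S"
proof -
  obtain T c where x: "x = (\<Sum>v\<in>T. c v *s v)" "finite T" "T \<subseteq> S" "\<forall>v\<in>T. P (c v)"
    using assms(3) unfolding comb_def by blast
  have "r *s x = (\<Sum>v\<in>T. (r * c v) *s v)"
    unfolding x(1) by (simp add: vec_eq_iff sum_distrib_left mult.assoc)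
  then show ?thesis unfolding comb_def
    by (intro CollectI exI[of _ T] exI[of _ "\<lambda>v. r * c v"]) (use x assms(1,2) in blast)
qed

lemma comb_add: assumes "\<And>x y. P x \<Longrightarrow> P y \<Longrightarrow> P (x + y)" "P 0"
  "x \<in> comb P S" "y \<in> comb P S"
  shows "x + y \<in> comb P S"
proof -
  obtain T1 c1 where x: "x = (\<Sum>v\<in>T1. c1 v *s v)" "finite T1" "T1 \<subseteq> S" "\<forall>v\<in>T1. P (c1 v)"
    using assms(3) unfolding comb_def by blast
  obtain T2 c2 where y: "y = (\<Sum>v\<in>T2. c2 v *s v)" "finite T2" "T2 \<subseteq> S" "\<forall>v\<in>T2. P (c2 v)"
    using assms(4) unfolding comb_def by blast
  define c where "c v = (if v \<in> T1 then c1 v else 0) + (if v \<in> T2 then c2 v else 0)" for v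
  have f: "finite (T1 \<union> T2)" using x y by simp
  have e1: "x = (\<Sum>v\<in>T1 \<union> T2. (if v \<in> T1 then c1 v else 0) *s v)"
  proof -
    have "(\<Sum>v\<in>T1 \<union> T2. (if v \<in> T1 then c1 v else 0) *s v)
        = (\<Sum>v\<in>T1 \<union> T2. if v \<in> T1 then c1 v *s v else 0)"
      by (rule sum.cong) auto
    also have "\<dots> = (\<Sum>v\<in>(T1 \<union> T2) \<inter> T1. c1 v *s v)"
      by (rule sum.inter_restrict[symmetric, OF f])
    finally show ?thesis using x(1) by (simp add: Int_absorb1)
  qed
  have e2: "y = (\<Sum>v\<in>T1 \<union> T2. (if v \<in> T2 then c2 v else 0) *s v)"
  proof -
    have "(\<Sum>v\<in>T1 \<union> T2. (if v \<in> T2 then c2 v else 0) *s v)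
        = (\<Sum>v\<in>T1 \<union> T2. if v \<in> T2 then c2 v *s v else 0)"
      by (rule sum.cong) auto
    also have "\<dots> = (\<Sum>v\<in>(T1 \<union> T2) \<inter> T2. c2 v *s v)"
      by (rule sum.inter_restrict[symmetric, OF f])
    finally show ?thesis using y(1) by (simp add: Int_absorb1)
  qed
  have "x + y = (\<Sum>v\<in>T1 \<union> T2. c v *s v)"
    unfolding e1 e2 c_def by (simp add: vector_sadd_rdistrib sum.distrib)
  moreover have "\<forall>v\<in>T1 \<union> T2. P (c v)"
    using x(4) y(4) assms(1,2) unfolding c_def by auto
  ultimately show ?thesis unfolding comb_def
    by (intro CollectI exI[of _ "T1 \<union> T2"] exI[of _ c]) (use f x(3) y(3) in blast)
qed

lemma comb_min:
  assumes "0 \<in> W" "\<And>x y. x \<in> W \<Longrightarrow> y \<in> W \<Longrightarrow> x + y \<in> W"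
    "\<And>r x. P r \<Longrightarrow> x \<in> W \<Longrightarrow> r *s x \<in> W" "S \<subseteq> W"
  shows "comb P S \<subseteq> W"
proof
  fix x assume "x \<in> comb P S"
  then obtain T c where x: "x = (\<Sum>v\<in>T. c v *s v)" "finite T" "T \<subseteq> S" "\<forall>v\<in>T. P (c v)"
    unfolding comb_def by blast
  have "(\<Sum>v\<in>T. c v *s v) \<in> W" using x(2-4)
  proof (induction T rule: finite_induct)
    case empty then show ?case using assms(1) by simp
  next
    case (insert t T) then show ?case using assms(2,3,4) by auto
  qed
  then show "x \<in> W" using x(1) by simp
qed

lemma comb_sum_idx:
  assumes "\<And>x y. P x \<Longrightarrow> P y \<Longrightarrow> P (x + y)" "P 0" "\<And>x y. P x \<Longrightarrow> P y \<Longrightarrow> P (x * y)"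
    "finite I" "\<forall>i\<in>I. f i \<in> comb P S" "\<forall>i\<in>I. P (c i)"
  shows "(\<Sum>i\<in>I. c i *s f i) \<in> comb P S"
  using assms(4-6)
proof (induction I rule: finite_induct)
  case empty then show ?case by (simp add: comb_zero)
next
  case (insert t T)
  have 1: "c t *s f t \<in> comb P S"
    by (rule comb_smult[of P, OF assms(3)]) (use insert.prems in auto)
  have 2: "(\<Sum>i\<in>T. c i *s f i) \<in> comb P S" using insert.IH insert.prems by blast
  have "(\<Sum>i\<in>insert t T. c i *s f i) = c t *s f t + (\<Sum>i\<in>T. c i *s f i)"
    using insert.hyps by (rule sum.insert)
  then show ?case using comb_add[of P, OF assms(1,2) 1 2] by simp
qed

lemma common_denom:
  fixes f :: "nat \<Rightarrow> rat"
  assumes "finite I"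
  shows "\<exists>D::int. D > 0 \<and> (\<forall>i\<in>I. \<exists>k::int. of_int D * f i = of_int k)"
  using assms
proof (induction I rule: finite_induct)
  case empty then show ?case by (intro exI[of _ 1]) auto
next
  case (insert x I)
  then obtain D where D: "D > 0" "\<forall>i\<in>I. \<exists>k::int. of_int D * f i = of_int k" by blast
  obtain n d where nd: "quotient_of (f x) = (n, d)" by (cases "quotient_of (f x)")
  have d: "d > 0" using quotient_of_denom_pos[OF nd] .
  have fx: "f x = of_int n / of_int d" using quotient_of_div[OF nd] .
  have "\<forall>i\<in>insert x I. \<exists>k::int. of_int (D * d) * f i = of_int k"
  proof
    fix i assume "i \<in> insert x I"
    then show "\<exists>k::int. of_int (D * d) * f i = of_int k"
    proof
      assume "i = x"
      then show ?thesis using d fx by (intro exI[of _ "D * n"]) simp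
    next
      assume "i \<in> I"
      then obtain k where "of_int D * f i = of_int k" using D by blast
      then show ?thesis by (intro exI[of _ "k * d"]) (simp add: algebra_simps)
    qed
  qed
  then show ?case using D d by (intro exI[of _ "D * d"]) simp
qed

lemma qvec_sum: "qvec (\<Sum>i\<in>I. k i *s a i) = (\<Sum>i\<in>I. of_int (k i) *s qvec (a i))"
  unfolding qvec_def by (simp add: vec_eq_iff of_int_sum)

lemma qvec_inj: "qvec x = qvec y \<Longrightarrow> x = y"
  unfolding qvec_def by (simp add: vec_eq_iff)

lemma qvec_smult: "qvec (k *s x) = of_int k *s qvec x"
  unfolding qvec_def by (simp add: vec_eq_iff)


lemma ZA_smult: "y \<in> ZA a E \<Longrightarrow> k *s y \<in> ZA a E"
proof -
  assume "y \<in> ZA a E"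
  then obtain c where y: "y = (\<Sum>i\<in>E. c i *s a i)" unfolding ZA_def by blast
  have eq: "k *s y = (\<Sum>i\<in>E. (k * c i) *s a i)"
    unfolding y by (simp add: vec_eq_iff sum_distrib_left mult.assoc)
  show ?thesis unfolding ZA_def by (intro CollectI exI[of _ "\<lambda>i. k * c i"]) (simp add: eq)
qed

definition WW :: "(nat \<Rightarrow> int ^ 'n) \<Rightarrow> nat set \<Rightarrow> (rat ^ 'n) set" where
  "WW a E = {\<Sum>i\<in>E. c i *s qvec (a i) | c. True}"

lemma WW_zero: "0 \<in> WW a E"
  unfolding WW_def by (intro CollectI exI[of _ "\<lambda>_. 0"]) simp

lemma WW_add: "x \<in> WW a E \<Longrightarrow> y \<in> WW a E \<Longrightarrow> x + y \<in> WW a E"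
proof -
  assume "x \<in> WW a E" "y \<in> WW a E"
  then obtain c d where "x = (\<Sum>i\<in>E. c i *s qvec (a i))" "y = (\<Sum>i\<in>E. d i *s qvec (a i))"
    unfolding WW_def by blast
  then have eq: "x + y = (\<Sum>i\<in>E. (c i + d i) *s qvec (a i))"
    by (simp add: vector_sadd_rdistrib sum.distrib)
  show ?thesis unfolding WW_def by (intro CollectI exI[of _ "\<lambda>i. c i + d i"]) (simp add: eq)
qed

lemma WW_smult: "x \<in> WW a E \<Longrightarrow> r *s x \<in> WW a E"
proof -
  assume "x \<in> WW a E"
  then obtain c where x: "x = (\<Sum>i\<in>E. c i *s qvec (a i))" unfolding WW_def by blast
  have eq: "r *s x = (\<Sum>i\<in>E. (r * c i) *s qvec (a i))"
    unfolding x by (simp add: vec_eq_iff sum_distrib_left mult.assoc)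
  show ?thesis unfolding WW_def by (intro CollectI exI[of _ "\<lambda>i. r * c i"]) (simp add: eq)
qed

lemma WW_base: "i \<in> E \<Longrightarrow> finite E \<Longrightarrow> qvec (a i) \<in> WW a E"
proof -
  assume i: "i \<in> E" and f: "finite E"
  have "(\<Sum>j\<in>E. (if j = i then 1 else 0) *s qvec (a j)) = (\<Sum>j\<in>E. if j = i then qvec (a j) else 0)"
    by (rule sum.cong) auto
  also have "\<dots> = qvec (a i)" using i f by simp
  finally show ?thesis unfolding WW_def by (intro CollectI exI[of _ "\<lambda>j. if j = i then 1 else 0"]) simp
qed

lemma sigma_sub_WW: "finite E \<Longrightarrow> sigma a E \<subseteq> WW a E"
  unfolding sigma_def posQ_comb
  by (rule comb_min) (auto intro: WW_zero WW_add WW_smult WW_base)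

lemma span_sigma_sub_WW: "finite E \<Longrightarrow> spanQ (sigma a E) \<subseteq> WW a E"
  unfolding spanQ_comb
  by (rule comb_min) (auto intro: WW_zero WW_add WW_smult sigma_sub_WW[THEN subsetD])

lemma common_denom2:
  fixes f :: "nat \<Rightarrow> rat"
  assumes "finite I"
  shows "\<exists>D::int. D > 0 \<and> (\<exists>k. \<forall>i\<in>I. of_int D * f i = of_int (k i))"
proof -
  obtain D where D: "D > 0" "\<forall>i\<in>I. \<exists>k::int. of_int D * f i = of_int k"
    using common_denom[OF assms] by blast
  from D(2) obtain k where "\<forall>i\<in>I. of_int D * f i = of_int (k i)" by metis
  then show ?thesis using D(1) by blast
qed

lemma WW_clear: "finite E \<Longrightarrow> x \<in> WW a E \<Longrightarrow> \<exists>D::int. D > 0 \<and> (\<exists>y\<in>ZA a E. of_int D *s x = qvec y)"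
proof -
  assume f: "finite E" and "x \<in> WW a E"
  then obtain c where x: "x = (\<Sum>i\<in>E. c i *s qvec (a i))" unfolding WW_def by blast
  obtain D k where D: "D > 0" "\<forall>i\<in>E. of_int D * c i = of_int (k i)"
    using common_denom2[OF f, of c] by blast
  have "of_int D *s x = (\<Sum>i\<in>E. (of_int D * c i) *s qvec (a i))"
    unfolding x by (simp add: vec_eq_iff sum_distrib_left mult.assoc)
  also have "\<dots> = (\<Sum>i\<in>E. of_int (k i) *s qvec (a i))"
    using D(2) by (intro sum.cong) auto
  also have "\<dots> = qvec (\<Sum>i\<in>E. k i *s a i)" by (rule qvec_sum[symmetric])
  finally have "of_int D *s x = qvec (\<Sum>i\<in>E. k i *s a i)" .
  moreover have "(\<Sum>i\<in>E. k i *s a i) \<in> ZA a E" unfolding ZA_def by blast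
  ultimately show ?thesis using D(1) by blast
qed

lemma NA_sigma: "finite E \<Longrightarrow> v \<in> NA a E \<Longrightarrow> qvec v \<in> sigma a E"
proof -
  assume f: "finite E" and "v \<in> NA a E"
  then obtain c where v: "v = (\<Sum>i\<in>E. int (c i) *s a i)" unfolding NA_def by blast
  have "qvec v = (\<Sum>i\<in>E. of_int (int (c i)) *s qvec (a i))" unfolding v by (rule qvec_sum)
  also have "\<dots> \<in> comb (\<lambda>c. c \<ge> 0) ((\<lambda>i. qvec (a i)) ` E)"
    by (rule comb_sum_idx) (auto simp: f intro: comb_base)
  finally show ?thesis unfolding sigma_def posQ_comb .
qed

theorem proposition3p1:
  fixes a :: "nat \<Rightarrow> int ^ 'n" and m :: nat and E1 E2 :: "nat set"
  assumes "affine_semigroup (NA a {1..m})"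
    and "E1 \<noteq> {}" and "E2 \<noteq> {}" and "E1 \<inter> E2 = {}" and "E1 \<union> E2 = {1..m}"
    and "is_gluing a E1 E2"
  shows "(\<exists>v \<in> sigma a E1 \<inter> sigma a E2.
            spanQ (sigma a E1) \<inter> spanQ (sigma a E2) = {q *s v | q. True})
         \<and> sigma a {1..m} = posQ (sigma a E1 \<union> sigma a E2)"
proof
  have f1: "finite E1" and f2: "finite E2" using assms(5) finite_subset
    by (metis finite_Un finite_atLeastAtMost)+
  obtain v where v: "v \<noteq> 0" "v \<in> NA a E1" "v \<in> NA a E2"
    "{k *s v | k. True} = ZA a E1 \<inter> ZA a E2"
    using assms(6) unfolding is_gluing_def by blast
  have V1: "qvec v \<in> sigma a E1" by (rule NA_sigma[OF f1 v(2)])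
  have V2: "qvec v \<in> sigma a E2" by (rule NA_sigma[OF f2 v(3)])
  have "spanQ (sigma a E1) \<inter> spanQ (sigma a E2) = {q *s qvec v | q. True}"
  proof
    show "spanQ (sigma a E1) \<inter> spanQ (sigma a E2) \<subseteq> {q *s qvec v | q. True}"
    proof
      fix x assume x: "x \<in> spanQ (sigma a E1) \<inter> spanQ (sigma a E2)"
      obtain D1 y1 where D1: "D1 > 0" "y1 \<in> ZA a E1" "of_int D1 *s x = qvec y1"
        using WW_clear[OF f1] span_sigma_sub_WW[OF f1] x by blast
      obtain D2 y2 where D2: "D2 > 0" "y2 \<in> ZA a E2" "of_int D2 *s x = qvec y2"
        using WW_clear[OF f2] span_sigma_sub_WW[OF f2] x by blast
      have "qvec (D2 *s y1) = of_int D2 *s (of_int D1 *s x)"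
        using D1(3) by (simp add: qvec_smult)
      also have "\<dots> = of_int (D1 * D2) *s x"
        by (simp add: vector_smult_assoc mult.commute)
      finally have qD: "qvec (D2 *s y1) = of_int (D1 * D2) *s x" .
      moreover have "qvec (D1 *s y2) = of_int D1 *s (of_int D2 *s x)"
        using D2(3) by (simp add: qvec_smult)
      moreover have "of_int D1 *s (of_int D2 *s x) = of_int (D1 * D2) *s x"
        by (simp add: vector_smult_assoc)
      ultimately have eq: "D2 *s y1 = D1 *s y2" using qvec_inj by metis
      have "D2 *s y1 \<in> ZA a E1 \<inter> ZA a E2"
        using ZA_smult[OF D1(2), of D2] ZA_smult[OF D2(2), of D1] eq by simp
      then obtain k where k: "D2 *s y1 = k *s v" using v(4) by blast
      have "of_int (D1 * D2) *s x = of_int k *s qvec v"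
        using qD k by (simp add: qvec_smult)
      then have "(1 / of_int (D1 * D2)) *s (of_int (D1 * D2) *s x) = (1 / of_int (D1 * D2)) *s (of_int k *s qvec v)"
        by simp
      then have "x = (of_int k / of_int (D1 * D2)) *s qvec v"
        using D1(1) D2(1) by (simp add: vector_smult_assoc)
      then show "x \<in> {q *s qvec v | q. True}" by blast
    qed
  next
    show "{q *s qvec v | q. True} \<subseteq> spanQ (sigma a E1) \<inter> spanQ (sigma a E2)"
    proof
      fix x assume "x \<in> {q *s qvec v | q. True}"
      then obtain q where q: "x = q *s qvec v" by blast
      have "x \<in> spanQ (sigma a E1)" unfolding spanQ_comb q
        by (rule comb_smult) (auto intro: comb_base V1)
      moreover have "x \<in> spanQ (sigma a E2)" unfolding spanQ_comb q
        by (rule comb_smult) (auto intro: comb_base V2)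
      ultimately show "x \<in> spanQ (sigma a E1) \<inter> spanQ (sigma a E2)" by blast
    qed
  qed
  then show "\<exists>v \<in> sigma a E1 \<inter> sigma a E2.
            spanQ (sigma a E1) \<inter> spanQ (sigma a E2) = {q *s v | q. True}"
    using V1 V2 by blast
next
  have add: "\<And>S x y. x \<in> posQ S \<Longrightarrow> y \<in> posQ S \<Longrightarrow> x + y \<in> posQ S"
    unfolding posQ_comb by (rule comb_add) auto
  have sm: "\<And>S x r. (r::rat) \<ge> 0 \<Longrightarrow> x \<in> posQ S \<Longrightarrow> r *s x \<in> posQ S"
    unfolding posQ_comb by (rule comb_smult) auto
  have base: "\<And>S x. x \<in> S \<Longrightarrow> x \<in> posQ S"
    unfolding posQ_comb by (rule comb_base) auto
  have zero: "\<And>S. 0 \<in> posQ S" unfolding posQ_comb by (rule comb_zero)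
  have sub: "\<And>E. E \<subseteq> {1..m} \<Longrightarrow> sigma a E \<subseteq> sigma a {1..m}"
  proof -
    fix E assume E: "E \<subseteq> {1..m}"
    have "comb (\<lambda>c. c \<ge> 0) ((\<lambda>i. qvec (a i)) ` E) \<subseteq> posQ ((\<lambda>i. qvec (a i)) ` {1..m})"
    proof (rule comb_min)
      show "(\<lambda>i. qvec (a i)) ` E \<subseteq> posQ ((\<lambda>i. qvec (a i)) ` {1..m})"
      proof
        fix x assume "x \<in> (\<lambda>i. qvec (a i)) ` E"
        then have "x \<in> (\<lambda>i. qvec (a i)) ` {1..m}" using E by blast
        then show "x \<in> posQ ((\<lambda>i. qvec (a i)) ` {1..m})" by (rule base)
      qed
    qed (rule zero, (rule add; assumption), (rule sm; assumption))
    then show "sigma a E \<subseteq> sigma a {1..m}" unfolding sigma_def posQ_comb .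
  qed
  show "sigma a {1..m} = posQ (sigma a E1 \<union> sigma a E2)"
  proof
    show "sigma a {1..m} \<subseteq> posQ (sigma a E1 \<union> sigma a E2)"
      unfolding sigma_def[of a "{1..m}"]
    proof (subst (1) posQ_comb, rule comb_min)
      show "(\<lambda>i. qvec (a i)) ` {1..m} \<subseteq> posQ (sigma a E1 \<union> sigma a E2)"
      proof
        fix x assume "x \<in> (\<lambda>i. qvec (a i)) ` {1..m}"
        then obtain i where i: "i \<in> E1 \<union> E2" "x = qvec (a i)" using assms(5) by auto
        have "x \<in> sigma a E1 \<or> x \<in> sigma a E2"
        proof (cases "i \<in> E1")
          case True
          then have "x \<in> (\<lambda>i. qvec (a i)) ` E1" using i by blast
          then show ?thesis unfolding sigma_def by (intro disjI1 base)
        next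
          case False
          then have "x \<in> (\<lambda>i. qvec (a i)) ` E2" using i by blast
          then show ?thesis unfolding sigma_def by (intro disjI2 base)
        qed
        then have "x \<in> sigma a E1 \<union> sigma a E2" by blast
        then show "x \<in> posQ (sigma a E1 \<union> sigma a E2)" by (rule base)
      qed
    qed (rule zero, (rule add; assumption), (rule sm; assumption))
    show "posQ (sigma a E1 \<union> sigma a E2) \<subseteq> sigma a {1..m}"
      unfolding posQ_comb[of "sigma a E1 \<union> sigma a E2"] sigma_def[of a "{1..m}"]
    proof (rule comb_min)
      show "sigma a E1 \<union> sigma a E2 \<subseteq> posQ ((\<lambda>i. qvec (a i)) ` {1..m})"
        using sub[of E1] sub[of E2] assms(5) unfolding sigma_def[of a "{1..m}"] by blast
    qed (rule zero, (rule add; assumption), (rule sm; assumption))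
  qed
qed

end
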